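(* Let $\mathcal E$ be an environment and $t_0,t_1$ closed terms with $t_0\approx_{\mathcal E}t_1$. Then for every closed evaluation context $F$, $F[t_0]\approx_{\mathcal E}F[t_1]$.
   Context: Terms of $\lambda_S$: $t ::= x \mid \lambda x.t \mid t\,t \mid \mathcal{S}k.t \mid \langle t\rangle$ (shift binds $k$; $\langle\cdot\rangle$ reset), up to $\alpha$-conversion. Values $v::=\lambda x.t$. Pure contexts $E ::= \Box \mid v\,E \mid E\,t$; evaluation contexts $F ::= \Box \mid v\,F \mid F\,t \mid \langle F\rangle$. Reduction: $F[(\lambda x.t)v]\to F[t\{v/x\}]$; $F[\langle E[\mathcal Sk.t]\rangle]\to F[\langle t\{\lambda x.\langle E[x]\rangle/k\}\rangle]$ ($x\notin\mathrm{fv}(E)$); $F[\langle v\rangle]\to F[v]$; $\to^*$ reflexive-transitive closure. Stuck term: not a value and irreducible; normal form: value or stuck term. Closures: for $R$ a relation on closed terms, $\widetilde R$ is the smallest relation containing $R$, all $(x,x)$, closed under all term constructors, restricted to closed terms; $\widehat R$ is the smallest relation on closed evaluation contexts with $\Box\widehat R\Box$, $v_0F_0\widehat Rv_1F_1$ if $F_0\widehat RF_1,v_0\widetilde Rv_1$; $F_0t_0\widehat RF_1t_1$ if $F_0\widehat RF_1,t_0\widetilde Rt_1$; $\langle F_0\rangle\widehat R\langle F_1\rangle$ if $F_0\widehat RF_1$. Environmental bisimilarity: an environment $\mathcal E$ is a relation on closed normal forms relating values only with values and stuck terms only with stuck terms; an environmental relation $\mathcal X$ is a set of environments and triples $(\mathcal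 E,t_0,t_1)$ with $t_0,t_1$ closed, written $t_0\mathcal X_{\mathcal E}t_1$. $\mathcal X$ is an environmental bisimulation if (1) whenever $t_0\mathcal X_{\mathcal E}t_1$: (a) $t_0\to t_0'$ implies $t_1\to^*t_1'$ with $t_0'\mathcal X_{\mathcal E}t_1'$; (b) if $t_0$ is a value $v_0$ then $t_1\to^*v_1$, a value, with $\mathcal E\cup\{(v_0,v_1)\}\in\mathcal X$; (c) if $t_0$ is stuck then $t_1\to^*t_1'$ stuck with $\mathcal E\cup\{(t_0,t_1')\}\in\mathcal X$; (d) symmetric conditions for $t_1$; (2) whenever $\mathcal E\in\mathcal X$: (a) $(\lambda x.t_0)\mathcal E(\lambda x.t_1)$ and $v_0\widetilde{\mathcal E}v_1$ imply $t_0\{v_0/x\}\mathcal X_{\mathcal E}t_1\{v_1/x\}$; (b) $E_0[\mathcal Sk.t_0]\mathcal EE_1[\mathcal Sk.t_1]$ and pure $E_0'\widehat{\mathcal E}E_1'$ imply $\langle t_0\{\lambda x.\langle E_0'[E_0[x]]\rangle/k\}\rangle\mathcal X_{\mathcal E}\langle t_1\{\lambda x.\langle E_1'[E_1[x]]\rangle/k\}\rangle$, $x$ fresh. $\approx$ is the largest environmental bisimulation; $t_0\approx_{\mathcal E}t_1$ means $(\mathcal E,t_0,t_1)\in\approx$. *)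

theory Defs
  imports Main
begin

text \<open>Lam t binds index 0 in t; Shift t binds the continuation variable k as index 0 in t;
  Reset t is the delimiter.\<close>

datatype trm = Var nat | Lam trm | App trm trm | Shift trm | Reset trm

fun is_value :: "trm \<Rightarrow> bool" where
  "is_value (Lam t) = True"
| "is_value _ = False"

fun closed_at :: "nat \<Rightarrow> trm \<Rightarrow> bool" where
  "closed_at n (Var i) = (i < n)"
| "closed_at n (Lam t) = closed_at (Suc n) t"
| "closed_at n (App s t) = (closed_at n s \<and> closed_at n t)"
| "closed_at n (Shift t) = closed_at (Suc n) t"
| "closed_at n (Reset t) = closed_at n t"

definition closed :: "trm \<Rightarrow> bool" where
  "closed t \<longleftrightarrow> closed_at 0 t"

fun lift :: "nat \<Rightarrow> trm \<Rightarrow> trm" where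
  "lift k (Var i) = (if i < k then Var i else Var (Suc i))"
| "lift k (Lam t) = Lam (lift (Suc k) t)"
| "lift k (App s t) = App (lift k s) (lift k t)"
| "lift k (Shift t) = Shift (lift (Suc k) t)"
| "lift k (Reset t) = Reset (lift k t)"

fun subst :: "trm \<Rightarrow> nat \<Rightarrow> trm \<Rightarrow> trm" where
  "subst (Var i) k s = (if i < k then Var i else if i = k then s else Var (i - 1))"
| "subst (Lam t) k s = Lam (subst t (Suc k) (lift 0 s))"
| "subst (App t u) k s = App (subst t k s) (subst u k s)"
| "subst (Shift t) k s = Shift (subst t (Suc k) (lift 0 s))"
| "subst (Reset t) k s = Reset (subst t k s)"

datatype ctx = Hole | CAppR trm ctx | CAppL ctx trm | CReset ctx

fun plug :: "ctx \<Rightarrow> trm \<Rightarrow> trm" where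
  "plug Hole t = t"
| "plug (CAppR v F) t = App v (plug F t)"
| "plug (CAppL F u) t = App (plug F t) u"
| "plug (CReset F) t = Reset (plug F t)"

fun eval_ctx :: "ctx \<Rightarrow> bool" where
  "eval_ctx Hole = True"
| "eval_ctx (CAppR v F) = (is_value v \<and> eval_ctx F)"
| "eval_ctx (CAppL F u) = eval_ctx F"
| "eval_ctx (CReset F) = eval_ctx F"

fun pure_ctx :: "ctx \<Rightarrow> bool" where
  "pure_ctx Hole = True"
| "pure_ctx (CAppR v F) = (is_value v \<and> pure_ctx F)"
| "pure_ctx (CAppL F u) = pure_ctx F"
| "pure_ctx (CReset F) = False"

fun closed_ctx :: "ctx \<Rightarrow> bool" where
  "closed_ctx Hole = True"
| "closed_ctx (CAppR v F) = (closed v \<and> closed_ctx F)"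
| "closed_ctx (CAppL F u) = (closed_ctx F \<and> closed u)"
| "closed_ctx (CReset F) = closed_ctx F"

fun lift_ctx :: "nat \<Rightarrow> ctx \<Rightarrow> ctx" where
  "lift_ctx k Hole = Hole"
| "lift_ctx k (CAppR v F) = CAppR (lift k v) (lift_ctx k F)"
| "lift_ctx k (CAppL F u) = CAppL (lift_ctx k F) (lift k u)"
| "lift_ctx k (CReset F) = CReset (lift_ctx k F)"

inductive step :: "trm \<Rightarrow> trm \<Rightarrow> bool" where
  beta: "eval_ctx F \<Longrightarrow> is_value v \<Longrightarrow>
     step (plug F (App (Lam t) v)) (plug F (subst t 0 v))"
| shift: "eval_ctx F \<Longrightarrow> pure_ctx E \<Longrightarrow>
     step (plug F (Reset (plug E (Shift t))))
          (plug F (Reset (subst t 0 (Lam (Reset (plug (lift_ctx 0 E) (Var 0)))))))"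
| reset: "eval_ctx F \<Longrightarrow> is_value v \<Longrightarrow>
     step (plug F (Reset v)) (plug F v)"

abbreviation steps :: "trm \<Rightarrow> trm \<Rightarrow> bool" where
  "steps \<equiv> step\<^sup>*\<^sup>*"

definition stuck :: "trm \<Rightarrow> bool" where
  "stuck t \<longleftrightarrow> \<not> is_value t \<and> (\<nexists>t'. step t t')"

definition normal_form :: "trm \<Rightarrow> bool" where
  "normal_form t \<longleftrightarrow> is_value t \<or> stuck t"

inductive tilde_cl :: "(trm \<times> trm) set \<Rightarrow> trm \<Rightarrow> trm \<Rightarrow> bool" for R where
  base: "(s, t) \<in> R \<Longrightarrow> tilde_cl R s t"
| var: "tilde_cl R (Var n) (Var n)"
| lam: "tilde_cl R s t \<Longrightarrow> tilde_cl R (Lam s) (Lam t)"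
| app: "tilde_cl R s1 t1 \<Longrightarrow> tilde_cl R s2 t2 \<Longrightarrow> tilde_cl R (App s1 s2) (App t1 t2)"
| shift: "tilde_cl R s t \<Longrightarrow> tilde_cl R (Shift s) (Shift t)"
| reset: "tilde_cl R s t \<Longrightarrow> tilde_cl R (Reset s) (Reset t)"

definition tilde :: "(trm \<times> trm) set \<Rightarrow> (trm \<times> trm) set" where
  "tilde R = {(s, t). tilde_cl R s t \<and> closed s \<and> closed t}"

inductive hat_cl :: "(trm \<times> trm) set \<Rightarrow> ctx \<Rightarrow> ctx \<Rightarrow> bool" for R where
  hole: "hat_cl R Hole Hole"
| appR: "hat_cl R F0 F1 \<Longrightarrow> is_value v0 \<Longrightarrow> is_value v1 \<Longrightarrow> (v0, v1) \<in> tilde R \<Longrightarrow>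
     hat_cl R (CAppR v0 F0) (CAppR v1 F1)"
| appL: "hat_cl R F0 F1 \<Longrightarrow> (t0, t1) \<in> tilde R \<Longrightarrow>
     hat_cl R (CAppL F0 t0) (CAppL F1 t1)"
| reset: "hat_cl R F0 F1 \<Longrightarrow> hat_cl R (CReset F0) (CReset F1)"

definition hat :: "(trm \<times> trm) set \<Rightarrow> (ctx \<times> ctx) set" where
  "hat R = {(F0, F1). hat_cl R F0 F1 \<and> eval_ctx F0 \<and> eval_ctx F1
                     \<and> closed_ctx F0 \<and> closed_ctx F1}"

definition is_env :: "(trm \<times> trm) set \<Rightarrow> bool" where
  "is_env \<E> \<longleftrightarrow> (\<forall>(s, t) \<in> \<E>. closed s \<and> closed t \<and> normal_form s \<and> normal_form t
                    \<and> (is_value s \<longleftrightarrow> is_value t) \<and> (stuck s \<longleftrightarrow> stuck t))"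

datatype elem = Env "(trm \<times> trm) set" | Tri "(trm \<times> trm) set" trm trm

definition env_relation :: "elem set \<Rightarrow> bool" where
  "env_relation X \<longleftrightarrow>
     (\<forall>\<E>. Env \<E> \<in> X \<longrightarrow> is_env \<E>) \<and>
     (\<forall>\<E> t0 t1. Tri \<E> t0 t1 \<in> X \<longrightarrow> is_env \<E> \<and> closed t0 \<and> closed t1)"

definition prog_cond :: "elem set \<Rightarrow> (trm \<times> trm) set \<Rightarrow> trm \<Rightarrow> trm \<Rightarrow> bool" where
  "prog_cond X \<E> t0 t1 \<longleftrightarrow>
     (\<forall>t0'. step t0 t0' \<longrightarrow> (\<exists>t1'. steps t1 t1' \<and> Tri \<E> t0' t1' \<in> X)) \<and>
     (is_value t0 \<longrightarrow> (\<exists>v1. steps t1 v1 \<and> is_value v1 \<and> Env (\<E> \<union> {(t0, v1)}) \<in> X)) \<and>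
     (stuck t0 \<longrightarrow> (\<exists>t1'. steps t1 t1' \<and> stuck t1' \<and> Env (\<E> \<union> {(t0, t1')}) \<in> X))"

definition prog_cond_rev :: "elem set \<Rightarrow> (trm \<times> trm) set \<Rightarrow> trm \<Rightarrow> trm \<Rightarrow> bool" where
  "prog_cond_rev X \<E> t0 t1 \<longleftrightarrow>
     (\<forall>t1'. step t1 t1' \<longrightarrow> (\<exists>t0'. steps t0 t0' \<and> Tri \<E> t0' t1' \<in> X)) \<and>
     (is_value t1 \<longrightarrow> (\<exists>v0. steps t0 v0 \<and> is_value v0 \<and> Env (\<E> \<union> {(v0, t1)}) \<in> X)) \<and>
     (stuck t1 \<longrightarrow> (\<exists>t0'. steps t0 t0' \<and> stuck t0' \<and> Env (\<E> \<union> {(t0', t1)}) \<in> X))"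

definition env_bisim :: "elem set \<Rightarrow> bool" where
  "env_bisim X \<longleftrightarrow> env_relation X \<and>
     (\<forall>\<E> t0 t1. Tri \<E> t0 t1 \<in> X \<longrightarrow> prog_cond X \<E> t0 t1 \<and> prog_cond_rev X \<E> t0 t1) \<and>
     (\<forall>\<E>. Env \<E> \<in> X \<longrightarrow>
        (\<forall>t0 t1 v0 v1. (Lam t0, Lam t1) \<in> \<E> \<longrightarrow> is_value v0 \<longrightarrow> is_value v1 \<longrightarrow>
            (v0, v1) \<in> tilde \<E> \<longrightarrow> Tri \<E> (subst t0 0 v0) (subst t1 0 v1) \<in> X) \<and>
        (\<forall>E0 E1 t0 t1 E0' E1'. pure_ctx E0 \<longrightarrow> pure_ctx E1 \<longrightarrow>
            (plug E0 (Shift t0), plug E1 (Shift t1)) \<in> \<E> \<longrightarrow>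
            pure_ctx E0' \<longrightarrow> pure_ctx E1' \<longrightarrow> (E0', E1') \<in> hat \<E> \<longrightarrow>
            Tri \<E>
              (Reset (subst t0 0 (Lam (Reset (plug (lift_ctx 0 E0') (plug (lift_ctx 0 E0) (Var 0)))))))
              (Reset (subst t1 0 (Lam (Reset (plug (lift_ctx 0 E1') (plug (lift_ctx 0 E1) (Var 0)))))))
            \<in> X))"

definition env_bisimilarity :: "elem set" where
  "env_bisimilarity = \<Union>{X. env_bisim X}"

definition approx_in :: "(trm \<times> trm) set \<Rightarrow> trm \<Rightarrow> trm \<Rightarrow> bool" where
  "approx_in \<E> t0 t1 \<longleftrightarrow> Tri \<E> t0 t1 \<in> env_bisimilarity"

end

theory Submission
  imports Defs
begin

lemma closed_at_mono: "closed_at n t \<Longrightarrow> n \<le> m \<Longrightarrow> closed_at m t"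
  by (induction n t arbitrary: m rule: closed_at.induct) auto

lemma lift_closed: "closed_at n t \<Longrightarrow> n \<le> k \<Longrightarrow> lift k t = t"
  by (induction t arbitrary: n k) auto

lemma subst_closed: "closed_at n t \<Longrightarrow> n \<le> k \<Longrightarrow> subst t k s = t"
  by (induction t arbitrary: n k s) auto

lemma closed_lift: "closed_at n s \<Longrightarrow> closed_at (Suc n) (lift k s)"
  by (induction s arbitrary: n k) auto

lemma closed_subst: "closed_at (Suc n) t \<Longrightarrow> k \<le> n \<Longrightarrow> closed_at n s \<Longrightarrow> closed_at n (subst t k s)"
proof (induction t arbitrary: n k s)
  case (Var x) then show ?case by auto
next
  case (Lam t) then show ?case using closed_lift by auto
next
  case (App t1 t2) then show ?case by auto
next
  case (Shift t) then show ?case using closed_lift by auto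
next
  case (Reset t) then show ?case by auto
qed

lemma closed_lift0: "closed t \<Longrightarrow> lift k t = t"
  unfolding closed_def using lift_closed by auto

lemma lift_ctx_closed: "closed_ctx F \<Longrightarrow> lift_ctx k F = F"
  by (induction F) (auto simp: closed_lift0)

lemma closed_plug_at: "closed_ctx F \<Longrightarrow> closed_at n t \<Longrightarrow> closed_at n (plug F t)"
  by (induction F) (auto simp: closed_def intro: closed_at_mono)

lemma closed_plug: "closed_ctx F \<Longrightarrow> closed t \<Longrightarrow> closed (plug F t)"
  using closed_plug_at closed_def by auto

lemma closed_plug_D: "closed (plug F t) \<Longrightarrow> closed t"
  by (induction F) (auto simp: closed_def)

lemma closed_plug_D2: "closed (plug F t) \<Longrightarrow> closed_ctx F"
  by (induction F) (auto simp: closed_def)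

fun comp :: "ctx \<Rightarrow> ctx \<Rightarrow> ctx" where
  "comp Hole G = G"
| "comp (CAppR v F) G = CAppR v (comp F G)"
| "comp (CAppL F u) G = CAppL (comp F G) u"
| "comp (CReset F) G = CReset (comp F G)"

lemma plug_comp[simp]: "plug (comp F G) t = plug F (plug G t)"
  by (induction F) auto
lemma eval_comp[simp]: "eval_ctx (comp F G) = (eval_ctx F \<and> eval_ctx G)"
  by (induction F) auto
lemma pure_comp[simp]: "pure_ctx (comp F G) = (pure_ctx F \<and> pure_ctx G)"
  by (induction F) auto
lemma closed_comp[simp]: "closed_ctx (comp F G) = (closed_ctx F \<and> closed_ctx G)"
  by (induction F) auto
lemma lift_comp[simp]: "lift_ctx k (comp F G) = comp (lift_ctx k F) (lift_ctx k G)"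
  by (induction F) auto

lemma pure_eval: "pure_ctx E \<Longrightarrow> eval_ctx E"
  by (induction E) auto

lemma tilde_refl: "tilde_cl R t t"
  by (induction t) (auto intro: tilde_cl.intros)

lemma tilde_cl_mono: "tilde_cl R s t \<Longrightarrow> R \<subseteq> S \<Longrightarrow> tilde_cl S s t"
  by (induction rule: tilde_cl.induct) (auto intro: tilde_cl.intros)

lemma tilde_mono: "R \<subseteq> S \<Longrightarrow> tilde R \<subseteq> tilde S"
  unfolding tilde_def using tilde_cl_mono by auto

lemma tilde_cl_tilde: "tilde_cl (tilde R) s t \<Longrightarrow> tilde_cl R s t"
  by (induction rule: tilde_cl.induct) (auto intro: tilde_cl.intros simp: tilde_def)

lemma tilde_tilde: "tilde (tilde R) \<subseteq> tilde R"
proof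
  fix p assume "p \<in> tilde (tilde R)"
  then show "p \<in> tilde R" using tilde_cl_tilde[of R] unfolding tilde_def[of "tilde R"]
    by (auto simp: tilde_def)
qed

lemma tilde_sub: "E \<subseteq> tilde E2 \<Longrightarrow> tilde E \<subseteq> tilde E2"
  using tilde_mono tilde_tilde by blast

lemma hat_cl_mono: "hat_cl R F0 F1 \<Longrightarrow> tilde R \<subseteq> tilde S \<Longrightarrow> hat_cl S F0 F1"
  by (induction rule: hat_cl.induct) (auto intro: hat_cl.intros)

lemma hat_sub: "E \<subseteq> tilde E2 \<Longrightarrow> hat E \<subseteq> hat E2"
  unfolding hat_def using hat_cl_mono tilde_sub by blast

lemma hat_mono: "E \<subseteq> E2 \<Longrightarrow> hat E \<subseteq> hat E2"
  unfolding hat_def using hat_cl_mono tilde_mono by blast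

lemma hat_cl_comp: "hat_cl R F0 F1 \<Longrightarrow> hat_cl R G0 G1 \<Longrightarrow> hat_cl R (comp F0 G0) (comp F1 G1)"
  by (induction rule: hat_cl.induct) (auto intro: hat_cl.intros)

lemma hat_comp: "(F0,F1) \<in> hat R \<Longrightarrow> (G0,G1) \<in> hat R \<Longrightarrow> (comp F0 G0, comp F1 G1) \<in> hat R"
  unfolding hat_def using hat_cl_comp by auto

lemma hat_refl_cl: "eval_ctx F \<Longrightarrow> closed_ctx F \<Longrightarrow> hat_cl R F F"
  by (induction F) (auto intro!: hat_cl.hole hat_cl.appR hat_cl.appL hat_cl.reset simp: tilde_def tilde_refl)

lemma hat_refl: "eval_ctx F \<Longrightarrow> closed_ctx F \<Longrightarrow> (F,F) \<in> hat R"
  unfolding hat_def using hat_refl_cl by auto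

lemma hat_Hole[simp]: "(Hole, Hole) \<in> hat R"
  by (simp add: hat_def hat_cl.hole)

definition closedR :: "(trm \<times> trm) set \<Rightarrow> bool" where
  "closedR R \<longleftrightarrow> (\<forall>(s,t)\<in>R. closed s \<and> closed t)"

lemma tilde_lift: "tilde_cl R s t \<Longrightarrow> closedR R \<Longrightarrow> tilde_cl R (lift k s) (lift k t)"
proof (induction arbitrary: k rule: tilde_cl.induct)
  case (base s t)
  then have "closed s" "closed t" by (auto simp: closedR_def)
  then show ?case using base by (simp add: closed_lift0 tilde_cl.base)
qed (auto intro: tilde_cl.intros)

lemma tilde_subst: "tilde_cl R s t \<Longrightarrow> tilde_cl R a b \<Longrightarrow> closedR R \<Longrightarrow>
   tilde_cl R (subst s k a) (subst t k b)"
proof (induction arbitrary: k a b rule: tilde_cl.induct)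
  case (base s t)
  then have "closed s" "closed t" by (auto simp: closedR_def)
  then show ?case using base subst_closed[of 0 s k] subst_closed[of 0 t k]
    by (auto simp: closed_def intro: tilde_cl.base)
next
  case (var n) then show ?case by (auto intro: tilde_cl.intros)
next
  case (lam s t) then show ?case by (simp add: tilde_cl.lam tilde_lift)
next
  case (shift s t) then show ?case by (simp add: tilde_cl.shift tilde_lift)
qed (auto intro!: tilde_cl.app tilde_cl.reset)

lemma hat_plug_cl: "hat_cl R F0 F1 \<Longrightarrow> tilde_cl R s0 s1 \<Longrightarrow> closedR R \<Longrightarrow>
  tilde_cl R (plug (lift_ctx k F0) s0) (plug (lift_ctx k F1) s1)"
  by (induction rule: hat_cl.induct) (auto simp: tilde_def intro!: tilde_cl.app tilde_cl.reset tilde_lift)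

lemma hat_plug_cl0: "hat_cl R F0 F1 \<Longrightarrow> tilde_cl R s0 s1 \<Longrightarrow> tilde_cl R (plug F0 s0) (plug F1 s1)"
  by (induction rule: hat_cl.induct) (auto simp: tilde_def intro!: tilde_cl.app tilde_cl.reset)

lemma hat_plug: "(F0,F1) \<in> hat R \<Longrightarrow> (s0,s1) \<in> tilde R \<Longrightarrow> (plug F0 s0, plug F1 s1) \<in> tilde R"
  unfolding hat_def tilde_def using hat_plug_cl0 closed_plug by auto


inductive sstep :: "trm \<Rightarrow> trm \<Rightarrow> bool" where
  sbeta: "is_value v \<Longrightarrow> sstep (App (Lam t) v) (subst t 0 v)"
| sshift: "pure_ctx E \<Longrightarrow> sstep (Reset (plug E (Shift t)))
     (Reset (subst t 0 (Lam (Reset (plug (lift_ctx 0 E) (Var 0))))))"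
| sreset: "is_value v \<Longrightarrow> sstep (Reset v) v"
| sappL: "sstep s s' \<Longrightarrow> sstep (App s t) (App s' t)"
| sappR: "is_value v \<Longrightarrow> sstep t t' \<Longrightarrow> sstep (App v t) (App v t')"
| sresetC: "sstep s s' \<Longrightarrow> sstep (Reset s) (Reset s')"

lemma sstep_ctx: "sstep s s' \<Longrightarrow> eval_ctx F \<Longrightarrow> sstep (plug F s) (plug F s')"
  by (induction F) (auto intro: sstep.intros)

lemma step_sstep: "step s s' \<Longrightarrow> sstep s s'"
  by (induction rule: step.induct) (auto intro!: sstep_ctx intro: sstep.intros)

lemma step_ctx: "step s s' \<Longrightarrow> eval_ctx G \<Longrightarrow> step (plug G s) (plug G s')"
proof (induction rule: step.induct)
  case (beta F v t)
  then show ?case using step.beta[of "comp G F" v t] by simp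
next
  case (shift F E t)
  then show ?case using step.shift[of "comp G F" E t] by simp
next
  case (reset F v)
  then show ?case using step.reset[of "comp G F" v] by simp
qed

lemma sstep_step: "sstep s s' \<Longrightarrow> step s s'"
proof (induction rule: sstep.induct)
  case (sbeta v t) then show ?case using step.beta[of Hole v t] by simp
next
  case (sshift E t) then show ?case using step.shift[of Hole E t] by simp
next
  case (sreset v) then show ?case using step.reset[of Hole v] by simp
next
  case (sappL s s' t) then show ?case using step_ctx[of s s' "CAppL Hole t"] by simp
next
  case (sappR v t t') then show ?case using step_ctx[of t t' "CAppR v Hole"] by simp
next
  case (sresetC s s') then show ?case using step_ctx[of s s' "CReset Hole"] by simp
qed

lemma step_iff: "step s s' = sstep s s'"
  using step_sstep sstep_step by blast

lemma value_no_sstep: "is_value v \<Longrightarrow> \<not> sstep v x"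
  by (cases v) (auto elim: sstep.cases)

lemma is_value_Lam: "is_value v \<longleftrightarrow> (\<exists>b. v = Lam b)"
  by (cases v) auto

lemma plug_shift_not_value: "pure_ctx K \<Longrightarrow> \<not> is_value (plug K (Shift t))"
  by (cases K) auto

lemma stuck_no_sstep: "pure_ctx K \<Longrightarrow> \<not> sstep (plug K (Shift t)) x"
proof (induction K arbitrary: x)
  case Hole then show ?case by (auto elim: sstep.cases)
next
  case (CAppR v K)
  show ?case
  proof
    assume "sstep (plug (CAppR v K) (Shift t)) x"
    then have "sstep (App v (plug K (Shift t))) x" by simp
    then show False
    proof (cases rule: sstep.cases)
      case sbeta then show ?thesis using CAppR plug_shift_not_value[of K t] by simp
    next
      case sappL then show ?thesis using CAppR value_no_sstep[of v] by simp
    next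
      case sappR then show ?thesis using CAppR by simp
    qed
  qed
next
  case (CAppL K u)
  show ?case
  proof
    assume "sstep (plug (CAppL K u) (Shift t)) x"
    then have "sstep (App (plug K (Shift t)) u) x" by simp
    then show False
    proof (cases rule: sstep.cases)
      case sbeta then show ?thesis using CAppL plug_shift_not_value[of K t] by simp
    next
      case sappL then show ?thesis using CAppL by simp
    next
      case sappR then show ?thesis using CAppL plug_shift_not_value[of K t] by simp
    qed
  qed
next
  case (CReset K) then show ?case by simp
qed

lemma unique_decomp: "pure_ctx K0 \<Longrightarrow> pure_ctx K1 \<Longrightarrow> plug K0 (Shift a) = plug K1 (Shift b)
  \<Longrightarrow> K0 = K1 \<and> a = b"
proof (induction K0 arbitrary: K1)
  case Hole then show ?case by (cases K1) auto
next
  case (CAppR v K)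
  show ?case
  proof (cases K1)
    case (CAppL K' u) then show ?thesis using CAppR.prems plug_shift_not_value[of K' b] by auto
  next
    case (CAppR v' K') then show ?thesis using CAppR.prems CAppR.IH[of K'] by auto
  qed (use CAppR.prems in auto)
next
  case (CAppL K u)
  show ?case
  proof (cases K1)
    case (CAppR v' K') then show ?thesis using CAppL.prems plug_shift_not_value[of K a] by auto
  next
    case (CAppL K' u') then show ?thesis using CAppL.prems CAppL.IH[of K'] by auto
  qed (use CAppL.prems in auto)
next
  case (CReset K) then show ?case by simp
qed

lemma sstep_det: "sstep a b \<Longrightarrow> sstep a c \<Longrightarrow> b = c"
proof (induction arbitrary: c rule: sstep.induct)
  case (sbeta v t)
  from sbeta.prems show ?case
  proof (cases rule: sstep.cases)
    case sappL then show ?thesis using value_no_sstep[of "Lam t"] by simp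
  next
    case sappR then show ?thesis using sbeta.hyps value_no_sstep[of v] by simp
  qed auto
next
  case (sshift E t)
  from sshift.prems show ?case
  proof (cases rule: sstep.cases)
    case (sshift E' t') then show ?thesis using sshift.hyps unique_decomp[of E E' t t'] by simp
  next
    case sreset then show ?thesis using sshift.hyps plug_shift_not_value[of E t] by simp
  next
    case sresetC then show ?thesis using sshift.hyps stuck_no_sstep[of E t] by simp
  qed
next
  case (sreset v)
  from sreset.prems show ?case
  proof (cases rule: sstep.cases)
    case (sshift E' t') then show ?thesis using sreset.hyps plug_shift_not_value[of E' t'] by simp
  next
    case sresetC then show ?thesis using sreset.hyps value_no_sstep[of v] by simp
  qed auto
next
  case (sappL s s' t)
  from sappL.prems show ?case
  proof (cases rule: sstep.cases)
    case sbeta then show ?thesis using sappL.hyps value_no_sstep[of s] by simp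
  next
    case sappL then show ?thesis using sappL.IH by simp
  next
    case sappR then show ?thesis using sappL.hyps value_no_sstep[of s] by simp
  qed
next
  case (sappR v t t')
  from sappR.prems show ?case
  proof (cases rule: sstep.cases)
    case sbeta then show ?thesis using sappR.hyps value_no_sstep[of t] by simp
  next
    case sappL then show ?thesis using sappR.hyps value_no_sstep[of v] by simp
  next
    case sappR then show ?thesis using sappR.IH by simp
  qed
next
  case (sresetC s s')
  from sresetC.prems show ?case
  proof (cases rule: sstep.cases)
    case (sshift E' t') then show ?thesis using sresetC.hyps stuck_no_sstep[of E' t'] by simp
  next
    case sreset then show ?thesis using sresetC.hyps value_no_sstep[of s] by simp
  next
    case sresetC then show ?thesis using sresetC.IH by simp
  qed
qed

lemma progress: "closed_at 0 t \<Longrightarrow> is_value t \<or> (\<exists>K s. pure_ctx K \<and> t = plug K (Shift s)) \<or> (\<exists>t'. sstep t t')"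
proof (induction t)
  case (Var x) then show ?case by simp
next
  case (Lam t) then show ?case by simp
next
  case (App t1 t2)
  then have h1: "is_value t1 \<or> (\<exists>K s. pure_ctx K \<and> t1 = plug K (Shift s)) \<or> (\<exists>t'. sstep t1 t')"
    and h2: "is_value t2 \<or> (\<exists>K s. pure_ctx K \<and> t2 = plug K (Shift s)) \<or> (\<exists>t'. sstep t2 t')" by auto
  show ?case
  proof (cases "is_value t1")
    case True
    then obtain b where b: "t1 = Lam b" by (auto simp: is_value_Lam)
    from h2 show ?thesis
    proof (elim disjE exE conjE)
      assume "is_value t2" then show ?thesis using b sstep.sbeta by blast
    next
      fix K s assume "pure_ctx K" "t2 = plug K (Shift s)"
      then show ?thesis using True by (intro disjI2 disjI1 exI[of _ "CAppR t1 K"]) auto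
    next
      fix t' assume "sstep t2 t'" then show ?thesis using True sstep.sappR by blast
    qed
  next
    case False
    with h1 show ?thesis
    proof (elim disjE exE conjE)
      fix K s assume "pure_ctx K" "t1 = plug K (Shift s)"
      then show ?thesis by (intro disjI2 disjI1 exI[of _ "CAppL K t2"]) auto
    next
      fix t' assume "sstep t1 t'" then show ?thesis using sstep.sappL by blast
    qed auto
  qed
next
  case (Shift t) then show ?case by (intro disjI2 disjI1 exI[of _ Hole]) auto
next
  case (Reset t)
  then have "is_value t \<or> (\<exists>K s. pure_ctx K \<and> t = plug K (Shift s)) \<or> (\<exists>t'. sstep t t')" by auto
  then show ?case using sstep.sreset sstep.sshift sstep.sresetC by blast
qed

lemma stuck_iff: "closed t \<Longrightarrow> stuck t \<longleftrightarrow> (\<exists>K s. pure_ctx K \<and> t = plug K (Shift s))"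
proof
  assume "closed t" "stuck t"
  then show "\<exists>K s. pure_ctx K \<and> t = plug K (Shift s)"
    using progress[of t] unfolding stuck_def step_iff closed_def by blast
next
  assume "\<exists>K s. pure_ctx K \<and> t = plug K (Shift s)"
  then show "stuck t" unfolding stuck_def step_iff using stuck_no_sstep plug_shift_not_value by blast
qed

lemma stuck_plug: "pure_ctx K \<Longrightarrow> stuck (plug K (Shift s))"
  unfolding stuck_def step_iff using stuck_no_sstep plug_shift_not_value by blast

lemma steps_ctx: "steps s s' \<Longrightarrow> eval_ctx F \<Longrightarrow> steps (plug F s) (plug F s')"
  by (induction rule: rtranclp_induct) (auto intro: rtranclp.rtrancl_into_rtrancl step_ctx)


abbreviation BB where "BB \<equiv> env_bisimilarity"

fun flipel :: "elem \<Rightarrow> elem" where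
  "flipel (Env E) = Env (E\<inverse>)"
| "flipel (Tri E a b) = Tri (E\<inverse>) b a"

lemma flipel_flipel[simp]: "flipel (flipel e) = e"
  by (cases e) auto

lemma mem_flip: "e \<in> flipel ` X \<longleftrightarrow> flipel e \<in> X"
  by (metis flipel_flipel image_iff)

lemma tilde_cl_conv1: "tilde_cl R a b \<Longrightarrow> tilde_cl (R\<inverse>) b a"
  by (induction rule: tilde_cl.induct) (auto intro: tilde_cl.intros)

lemma tilde_cl_conv: "tilde_cl (R\<inverse>) b a = tilde_cl R a b"
  using tilde_cl_conv1[of R a b] tilde_cl_conv1[of "R\<inverse>" b a] by auto

lemma tilde_conv: "tilde (R\<inverse>) = (tilde R)\<inverse>"
  unfolding tilde_def using tilde_cl_conv by auto

lemma hat_cl_conv1: "hat_cl R a b \<Longrightarrow> hat_cl (R\<inverse>) b a"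
  by (induction rule: hat_cl.induct) (auto intro: hat_cl.intros simp: tilde_conv)

lemma hat_cl_conv: "hat_cl (R\<inverse>) b a = hat_cl R a b"
  using hat_cl_conv1[of R a b] hat_cl_conv1[of "R\<inverse>" b a] by auto

lemma hat_conv: "hat (R\<inverse>) = (hat R)\<inverse>"
  unfolding hat_def using hat_cl_conv by auto

lemma is_env_conv: "is_env (R\<inverse>) = is_env R"
  unfolding is_env_def by auto

lemma conv_ins: "(E \<union> {(a,b)})\<inverse> = E\<inverse> \<union> {(b,a)}" by auto
lemma conv_insert: "(insert (a,b) E)\<inverse> = insert (b,a) (E\<inverse>)" by auto

lemma mem_conv_tilde: "(a,b) \<in> tilde (E\<inverse>) \<longleftrightarrow> (b,a) \<in> tilde E"
  by (simp add: tilde_conv)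
lemma mem_conv_hat: "(a,b) \<in> hat (E\<inverse>) \<longleftrightarrow> (b,a) \<in> hat E"
  by (simp add: hat_conv)

lemma env_bisim_flip:
  assumes X: "env_bisim X"
  shows "env_bisim (flipel ` X)"
  unfolding env_bisim_def
proof (intro conjI allI impI)
  have R: "env_relation X" using X unfolding env_bisim_def by blast
  show "env_relation (flipel ` X)"
    unfolding env_relation_def
  proof (rule conjI; intro allI impI)
    fix E assume "Env E \<in> flipel ` X"
    then have "Env (E\<inverse>) \<in> X" by (simp add: mem_flip)
    then have "is_env (E\<inverse>)" using R unfolding env_relation_def by blast
    then show "is_env E" by (simp add: is_env_conv)
  next
    fix E t0 t1 assume "Tri E t0 t1 \<in> flipel ` X"
    then have "Tri (E\<inverse>) t1 t0 \<in> X" by (simp add: mem_flip)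
    then have "is_env (E\<inverse>) \<and> closed t1 \<and> closed t0" using R unfolding env_relation_def by blast
    then show "is_env E \<and> closed t0 \<and> closed t1" by (simp add: is_env_conv)
  qed
next
  fix E t0 t1 assume "Tri E t0 t1 \<in> flipel ` X"
  then have T: "Tri (E\<inverse>) t1 t0 \<in> X" by (simp add: mem_flip)
  then have pr: "prog_cond_rev X (E\<inverse>) t1 t0" and p: "prog_cond X (E\<inverse>) t1 t0"
    using X unfolding env_bisim_def by auto
  show "prog_cond (flipel ` X) E t0 t1"
    using pr unfolding prog_cond_def prog_cond_rev_def mem_flip
    by (simp add: conv_insert)
  show "prog_cond_rev (flipel ` X) E t0 t1"
    using p unfolding prog_cond_def prog_cond_rev_def mem_flip
    by (simp add: conv_insert)
next
  fix E t0 t1 v0 v1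
  assume EE: "Env E \<in> flipel ` X" and h: "(Lam t0, Lam t1) \<in> E" "is_value v0" "is_value v1" "(v0, v1) \<in> tilde E"
  then have EX: "Env (E\<inverse>) \<in> X" by (simp add: mem_flip)
  have "Tri (E\<inverse>) (subst t1 0 v1) (subst t0 0 v0) \<in> X"
    using X EX h unfolding env_bisim_def by (simp add: mem_conv_tilde)
  then show "Tri E (subst t0 0 v0) (subst t1 0 v1) \<in> flipel ` X" by (simp add: mem_flip)
next
  fix E E0 E1 t0 t1 E0' E1'
  assume EE: "Env E \<in> flipel ` X" and h: "pure_ctx E0" "pure_ctx E1" "(plug E0 (Shift t0), plug E1 (Shift t1)) \<in> E"
      "pure_ctx E0'" "pure_ctx E1'" "(E0', E1') \<in> hat E"
  then have EX: "Env (E\<inverse>) \<in> X" by (simp add: mem_flip)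
  have "Tri (E\<inverse>)
              (Reset (subst t1 0 (Lam (Reset (plug (lift_ctx 0 E1') (plug (lift_ctx 0 E1) (Var 0)))))))
              (Reset (subst t0 0 (Lam (Reset (plug (lift_ctx 0 E0') (plug (lift_ctx 0 E0) (Var 0)))))))
            \<in> X"
    using X EX h unfolding env_bisim_def by (simp add: mem_conv_hat)
  then show "Tri E
              (Reset (subst t0 0 (Lam (Reset (plug (lift_ctx 0 E0') (plug (lift_ctx 0 E0) (Var 0)))))))
              (Reset (subst t1 0 (Lam (Reset (plug (lift_ctx 0 E1') (plug (lift_ctx 0 E1) (Var 0)))))))
            \<in> flipel ` X" by (simp add: mem_flip)
qed

lemma prog_cond_mono: "prog_cond X E a b \<Longrightarrow> X \<subseteq> Y \<Longrightarrow> prog_cond Y E a b"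
  unfolding prog_cond_def by (meson subsetD)
lemma prog_cond_rev_mono: "prog_cond_rev X E a b \<Longrightarrow> X \<subseteq> Y \<Longrightarrow> prog_cond_rev Y E a b"
  unfolding prog_cond_rev_def by (meson subsetD)

lemma env_bisim_BB: "env_bisim BB"
  unfolding env_bisim_def
proof (intro conjI allI impI)
  show "env_relation BB"
    unfolding env_relation_def
  proof (rule conjI; intro allI impI)
    fix E assume "Env E \<in> BB"
    then obtain X where X: "env_bisim X" "Env E \<in> X" unfolding env_bisimilarity_def by blast
    then have "env_relation X" unfolding env_bisim_def by simp
    with X(2) show "is_env E" unfolding env_relation_def by simp
  next
    fix E t0 t1 assume "Tri E t0 t1 \<in> BB"
    then obtain X where X: "env_bisim X" "Tri E t0 t1 \<in> X" unfolding env_bisimilarity_def by blast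
    then have "env_relation X" unfolding env_bisim_def by simp
    with X(2) show "is_env E \<and> closed t0 \<and> closed t1" unfolding env_relation_def by simp
  qed
next
  fix E t0 t1 assume "Tri E t0 t1 \<in> BB"
  then obtain X where X: "env_bisim X" "Tri E t0 t1 \<in> X" unfolding env_bisimilarity_def by blast
  have sub: "X \<subseteq> BB" using X unfolding env_bisimilarity_def by blast
  have "prog_cond X E t0 t1" "prog_cond_rev X E t0 t1" using X unfolding env_bisim_def by auto
  then show "prog_cond BB E t0 t1" "prog_cond_rev BB E t0 t1"
    using sub prog_cond_mono prog_cond_rev_mono by auto
next
  fix E t0 t1 v0 v1
  assume EE: "Env E \<in> BB" and h: "(Lam t0, Lam t1) \<in> E" "is_value v0" "is_value v1" "(v0, v1) \<in> tilde E"
  then obtain X where X: "env_bisim X" "Env E \<in> X" unfolding env_bisimilarity_def by blast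
  have sub: "X \<subseteq> BB" using X unfolding env_bisimilarity_def by blast
  have "Tri E (subst t0 0 v0) (subst t1 0 v1) \<in> X"
    using X h unfolding env_bisim_def by simp
  then show "Tri E (subst t0 0 v0) (subst t1 0 v1) \<in> BB" using sub by blast
next
  fix E E0 E1 t0 t1 E0' E1'
  assume EE: "Env E \<in> BB" and h: "pure_ctx E0" "pure_ctx E1" "(plug E0 (Shift t0), plug E1 (Shift t1)) \<in> E"
      "pure_ctx E0'" "pure_ctx E1'" "(E0', E1') \<in> hat E"
  then obtain X where X: "env_bisim X" "Env E \<in> X" unfolding env_bisimilarity_def by blast
  have sub: "X \<subseteq> BB" using X unfolding env_bisimilarity_def by blast
  have "Tri E
              (Reset (subst t0 0 (Lam (Reset (plug (lift_ctx 0 E0') (plug (lift_ctx 0 E0) (Var 0)))))))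
              (Reset (subst t1 0 (Lam (Reset (plug (lift_ctx 0 E1') (plug (lift_ctx 0 E1) (Var 0)))))))
            \<in> X"
    using X h unfolding env_bisim_def by simp
  then show "Tri E
              (Reset (subst t0 0 (Lam (Reset (plug (lift_ctx 0 E0') (plug (lift_ctx 0 E0) (Var 0)))))))
              (Reset (subst t1 0 (Lam (Reset (plug (lift_ctx 0 E1') (plug (lift_ctx 0 E1) (Var 0)))))))
            \<in> BB" using sub by blast
qed

lemma BB_flip: "e \<in> BB \<Longrightarrow> flipel e \<in> BB"
proof -
  assume "e \<in> BB"
  then have "flipel e \<in> flipel ` BB" by blast
  moreover have "flipel ` BB \<subseteq> BB"
    using env_bisim_flip[OF env_bisim_BB] unfolding env_bisimilarity_def by blast
  ultimately show ?thesis by blast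
qed

lemma BB_sub: "env_bisim X \<Longrightarrow> X \<subseteq> BB"
  unfolding env_bisimilarity_def by blast

lemma half_bisim:
  assumes rel: "env_relation X"
    and fl: "\<And>e. e \<in> X \<Longrightarrow> flipel e \<in> X"
    and pc: "\<And>E t0 t1. Tri E t0 t1 \<in> X \<Longrightarrow> prog_cond X E t0 t1"
    and c2: "\<And>E. Env E \<in> X \<Longrightarrow>
        (\<forall>t0 t1 v0 v1. (Lam t0, Lam t1) \<in> E \<longrightarrow> is_value v0 \<longrightarrow> is_value v1 \<longrightarrow>
            (v0, v1) \<in> tilde E \<longrightarrow> Tri E (subst t0 0 v0) (subst t1 0 v1) \<in> X) \<and>
        (\<forall>E0 E1 t0 t1 E0' E1'. pure_ctx E0 \<longrightarrow> pure_ctx E1 \<longrightarrow>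
            (plug E0 (Shift t0), plug E1 (Shift t1)) \<in> E \<longrightarrow>
            pure_ctx E0' \<longrightarrow> pure_ctx E1' \<longrightarrow> (E0', E1') \<in> hat E \<longrightarrow>
            Tri E
              (Reset (subst t0 0 (Lam (Reset (plug (lift_ctx 0 E0') (plug (lift_ctx 0 E0) (Var 0)))))))
              (Reset (subst t1 0 (Lam (Reset (plug (lift_ctx 0 E1') (plug (lift_ctx 0 E1) (Var 0)))))))
            \<in> X)"
  shows "env_bisim X"
  unfolding env_bisim_def
proof (intro conjI allI impI)
  fix E t0 t1 assume T: "Tri E t0 t1 \<in> X"
  show "prog_cond X E t0 t1" using pc T .
  have T': "Tri (E\<inverse>) t1 t0 \<in> X" using fl[OF T] by simp
  have p: "prog_cond X (E\<inverse>) t1 t0" using pc[OF T'] .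
  have fl2: "\<And>E a b. Tri (E\<inverse>) b a \<in> X \<Longrightarrow> Tri E a b \<in> X"
    using fl by (metis converse_converse flipel.simps(2))
  have fl3: "\<And>E. Env (E\<inverse>) \<in> X \<Longrightarrow> Env E \<in> X"
    using fl by (metis converse_converse flipel.simps(1))
  show "prog_cond_rev X E t0 t1"
    unfolding prog_cond_rev_def
  proof (intro conjI allI impI)
    fix t1' assume "step t1 t1'"
    then obtain t0' where "steps t0 t0'" "Tri (E\<inverse>) t1' t0' \<in> X" using p unfolding prog_cond_def by blast
    then show "\<exists>t0'. steps t0 t0' \<and> Tri E t0' t1' \<in> X" using fl2 by blast
  next
    assume "is_value t1"
    then obtain v0 where "steps t0 v0" "is_value v0" "Env (E\<inverse> \<union> {(t1, v0)}) \<in> X"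
      using p unfolding prog_cond_def by blast
    then show "\<exists>v0. steps t0 v0 \<and> is_value v0 \<and> Env (E \<union> {(v0, t1)}) \<in> X"
      using fl3[of "E \<union> {(v0, t1)}"] unfolding conv_ins by blast
  next
    assume "stuck t1"
    then obtain v0 where "steps t0 v0" "stuck v0" "Env (E\<inverse> \<union> {(t1, v0)}) \<in> X"
      using p unfolding prog_cond_def by blast
    then show "\<exists>t0'. steps t0 t0' \<and> stuck t0' \<and> Env (E \<union> {(t0', t1)}) \<in> X"
      using fl3[of "E \<union> {(v0, t1)}"] unfolding conv_ins by blast
  qed
qed (use rel c2 in auto)


lemma BB_rel: "env_relation BB"
  using env_bisim_BB unfolding env_bisim_def by (rule conjunct1)

lemma BB_Tri: "Tri E a b \<in> BB \<Longrightarrow> is_env E \<and> closed a \<and> closed b"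
  using BB_rel unfolding env_relation_def by simp

lemma BB_Env: "Env E \<in> BB \<Longrightarrow> is_env E"
  using BB_rel unfolding env_relation_def by simp

lemma BB_prog: "Tri E a b \<in> BB \<Longrightarrow> prog_cond BB E a b"
  using env_bisim_BB unfolding env_bisim_def by simp

definition kont :: "ctx \<Rightarrow> ctx \<Rightarrow> trm \<Rightarrow> trm" where
  "kont E' K t = Reset (subst t 0 (Lam (Reset (plug (lift_ctx 0 E') (plug (lift_ctx 0 K) (Var 0))))))"

lemma BB_2a: "Env E \<in> BB \<Longrightarrow> (Lam t0, Lam t1) \<in> E \<Longrightarrow> is_value v0 \<Longrightarrow> is_value v1 \<Longrightarrow>
   (v0, v1) \<in> tilde E \<Longrightarrow> Tri E (subst t0 0 v0) (subst t1 0 v1) \<in> BB"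
  using env_bisim_BB unfolding env_bisim_def by simp

lemma BB_2b: "Env E \<in> BB \<Longrightarrow> pure_ctx E0 \<Longrightarrow> pure_ctx E1 \<Longrightarrow>
   (plug E0 (Shift t0), plug E1 (Shift t1)) \<in> E \<Longrightarrow>
   pure_ctx E0' \<Longrightarrow> pure_ctx E1' \<Longrightarrow> (E0', E1') \<in> hat E \<Longrightarrow>
   Tri E (kont E0' E0 t0) (kont E1' E1 t1) \<in> BB"
  unfolding kont_def using env_bisim_BB unfolding env_bisim_def by simp

lemma is_env_closedR: "is_env E \<Longrightarrow> closedR E"
  unfolding is_env_def closedR_def by auto

lemma is_env_sub_tilde: "is_env E \<Longrightarrow> E \<subseteq> tilde E"
  unfolding is_env_def tilde_def by (auto intro: tilde_cl.base)

definition Y :: "(trm \<times> trm) set \<Rightarrow> trm \<Rightarrow> trm \<Rightarrow> bool" where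
  "Y E2 a b \<longleftrightarrow> (\<exists>F0 F1 s0 s1. (F0,F1) \<in> hat E2 \<and> Tri E2 s0 s1 \<in> BB \<and> a = plug F0 s0 \<and> b = plug F1 s1)
      \<or> (a,b) \<in> tilde E2"

lemma Y_wrap: "Y E2 a b \<Longrightarrow> (G0,G1) \<in> hat E2 \<Longrightarrow> Y E2 (plug G0 a) (plug G1 b)"
proof -
  assume y: "Y E2 a b" and g: "(G0,G1) \<in> hat E2"
  show ?thesis
  proof (cases "(a,b) \<in> tilde E2")
    case True then show ?thesis using g hat_plug unfolding Y_def by blast
  next
    case False
    then obtain F0 F1 s0 s1 where "(F0,F1) \<in> hat E2" "Tri E2 s0 s1 \<in> BB" "a = plug F0 s0" "b = plug F1 s1"
      using y unfolding Y_def by blast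
    then show ?thesis unfolding Y_def using hat_comp[OF g] by (metis plug_comp)
  qed
qed

lemma Y_BB: "Tri E2 s0 s1 \<in> BB \<Longrightarrow> Y E2 s0 s1"
  unfolding Y_def using hat_Hole by (metis plug.simps(1))

lemma tilde_val: "is_env E2 \<Longrightarrow> tilde_cl E2 u0 u1 \<Longrightarrow> is_value u0 \<Longrightarrow> is_value u1"
  by (erule tilde_cl.cases) (auto simp: is_env_def)

lemma kont_closed: "closed_at 1 t \<Longrightarrow> closed_ctx E' \<Longrightarrow> closed_ctx K \<Longrightarrow> closed (kont E' K t)"
  unfolding kont_def closed_def
  by (auto simp: lift_ctx_closed intro!: closed_subst closed_plug_at)

lemma kont_tilde: "closedR R \<Longrightarrow> tilde_cl R t0 t1 \<Longrightarrow> hat_cl R E0 E1 \<Longrightarrow>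
   tilde_cl R (kont E0 Hole t0) (kont E1 Hole t1)"
  unfolding kont_def
  by (auto intro!: tilde_cl.reset tilde_cl.lam tilde_subst hat_plug_cl tilde_cl.var)

lemma stuck_base:
  assumes B: "Env E2 \<in> BB" and p: "(s0, s1) \<in> E2" and K0: "pure_ctx K0" and s0: "s0 = plug K0 (Shift t0)"
  shows "\<exists>K1 t1. pure_ctx K1 \<and> s1 = plug K1 (Shift t1) \<and>
     (\<forall>E0' E1'. pure_ctx E0' \<longrightarrow> pure_ctx E1' \<longrightarrow> (E0',E1') \<in> hat E2 \<longrightarrow>
         Y E2 (kont E0' K0 t0) (kont E1' K1 t1))"
proof -
  have env: "is_env E2" using BB_Env[OF B] .
  then have "closed s1" "stuck s0 = stuck s1" using p unfolding is_env_def by auto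
  moreover have "stuck s0" using stuck_plug[OF K0] s0 by simp
  ultimately obtain K1 t1 where K1: "pure_ctx K1" "s1 = plug K1 (Shift t1)" using stuck_iff by blast
  show ?thesis
  proof (intro exI conjI allI impI)
    show "pure_ctx K1" "s1 = plug K1 (Shift t1)" using K1 by auto
    fix E0' E1' assume "pure_ctx E0'" "pure_ctx E1'" "(E0',E1') \<in> hat E2"
    then show "Y E2 (kont E0' K0 t0) (kont E1' K1 t1)"
      using BB_2b[OF B K0 K1(1), of t0 t1 E0' E1'] p s0 K1 Y_BB by blast
  qed
qed


lemma hat_appL: "(u,u1) \<in> tilde R \<Longrightarrow> (CAppL Hole u, CAppL Hole u1) \<in> hat R"
  unfolding hat_def tilde_def by (auto intro!: hat_cl.appL hat_cl.hole simp: tilde_def)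

lemma hat_appR: "(v,v1) \<in> tilde R \<Longrightarrow> is_value v \<Longrightarrow> is_value v1 \<Longrightarrow> (CAppR v Hole, CAppR v1 Hole) \<in> hat R"
  unfolding hat_def tilde_def by (auto intro!: hat_cl.appR hat_cl.hole simp: tilde_def)

lemma hat_reset: "(CReset Hole, CReset Hole) \<in> hat R"
  unfolding hat_def by (auto intro!: hat_cl.reset hat_cl.hole)

lemma stuck_rel:
  assumes B: "Env E2 \<in> BB"
  shows "tilde_cl E2 s0 s1 \<Longrightarrow> closed s0 \<Longrightarrow> closed s1 \<Longrightarrow> pure_ctx K0 \<Longrightarrow> s0 = plug K0 (Shift t0) \<Longrightarrow>
   \<exists>K1 t1. pure_ctx K1 \<and> s1 = plug K1 (Shift t1) \<and>
     (\<forall>E0' E1'. pure_ctx E0' \<longrightarrow> pure_ctx E1' \<longrightarrow> (E0',E1') \<in> hat E2 \<longrightarrow>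
         Y E2 (kont E0' K0 t0) (kont E1' K1 t1))"
proof (induction K0 arbitrary: s0 s1 t0)
  have env: "is_env E2" using BB_Env[OF B] .
  {
  case Hole
  from Hole.prems(1) show ?case
  proof (cases rule: tilde_cl.cases)
    case base then show ?thesis using stuck_base[OF B] Hole.prems by blast
  next
    case (shift a t1)
    then have a: "a = t0" using Hole.prems by simp
    show ?thesis
    proof (intro exI conjI allI impI)
      show "pure_ctx Hole" "s1 = plug Hole (Shift t1)" using shift by auto
      fix E0' E1' assume h: "pure_ctx E0'" "pure_ctx E1'" "(E0',E1') \<in> hat E2"
      have T: "tilde_cl E2 (kont E0' Hole t0) (kont E1' Hole t1)"
        using kont_tilde[OF is_env_closedR[OF env]] shift a h unfolding hat_def by blast
      have c01: "closed_at 1 t0" "closed_at 1 t1" using Hole.prems shift a by (auto simp: closed_def)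
      moreover have "closed_ctx E0'" "closed_ctx E1'" using h by (auto simp: hat_def)
      ultimately have "closed (kont E0' Hole t0)" "closed (kont E1' Hole t1)"
        by (auto intro!: kont_closed)
      with T show "Y E2 (kont E0' Hole t0) (kont E1' Hole t1)" unfolding Y_def tilde_def by blast
    qed
  qed (use Hole.prems in auto)
  }
next
  case (CAppL K u)
  have env: "is_env E2" using BB_Env[OF B] .
  from CAppL.prems(1) show ?case
  proof (cases rule: tilde_cl.cases)
    case base then show ?thesis using stuck_base[OF B] CAppL.prems by blast
  next
    case (app a a1 b b1)
    then have a: "a = plug K (Shift t0)" "b = u" using CAppL.prems by auto
    have cl: "closed a" "closed a1" "closed u" "closed b1" using CAppL.prems app a by (auto simp: closed_def)
    obtain K1 t1 where K1: "pure_ctx K1" "a1 = plug K1 (Shift t1)"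
      and P: "\<And>E0' E1'. pure_ctx E0' \<Longrightarrow> pure_ctx E1' \<Longrightarrow> (E0',E1') \<in> hat E2 \<Longrightarrow>
         Y E2 (kont E0' K t0) (kont E1' K1 t1)"
      using CAppL.IH[of a a1 t0] app a cl CAppL.prems by auto
    have ut: "(u, b1) \<in> tilde E2" using app a cl unfolding tilde_def by auto
    show ?thesis
    proof (intro exI conjI allI impI)
      show "pure_ctx (CAppL K1 b1)" "s1 = plug (CAppL K1 b1) (Shift t1)" using K1 app by auto
      fix E0' E1' assume h: "pure_ctx E0'" "pure_ctx E1'" "(E0',E1') \<in> hat E2"
      have "Y E2 (kont (comp E0' (CAppL Hole u)) K t0) (kont (comp E1' (CAppL Hole b1)) K1 t1)"
        using P h hat_comp[OF h(3) hat_appL[OF ut]] by simp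
      then show "Y E2 (kont E0' (CAppL K u) t0) (kont E1' (CAppL K1 b1) t1)"
        by (simp add: kont_def)
    qed
  qed (use CAppL.prems in auto)
next
  case (CAppR v K)
  have env: "is_env E2" using BB_Env[OF B] .
  from CAppR.prems(1) show ?case
  proof (cases rule: tilde_cl.cases)
    case base then show ?thesis using stuck_base[OF B] CAppR.prems by blast
  next
    case (app a a1 b b1)
    then have a: "b = plug K (Shift t0)" "a = v" using CAppR.prems by auto
    have cl: "closed b" "closed b1" "closed v" "closed a1" using CAppR.prems app a by (auto simp: closed_def)
    obtain K1 t1 where K1: "pure_ctx K1" "b1 = plug K1 (Shift t1)"
      and P: "\<And>E0' E1'. pure_ctx E0' \<Longrightarrow> pure_ctx E1' \<Longrightarrow> (E0',E1') \<in> hat E2 \<Longrightarrow>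
         Y E2 (kont E0' K t0) (kont E1' K1 t1)"
      using CAppR.IH[of b b1 t0] app a cl CAppR.prems by auto
    have vt: "(v, a1) \<in> tilde E2" using app a cl unfolding tilde_def by auto
    have vv: "is_value v" using CAppR.prems by simp
    have vv1: "is_value a1" using tilde_val[OF env] app a vv by blast
    show ?thesis
    proof (intro exI conjI allI impI)
      show "pure_ctx (CAppR a1 K1)" "s1 = plug (CAppR a1 K1) (Shift t1)" using K1 app vv1 by auto
      fix E0' E1' assume h: "pure_ctx E0'" "pure_ctx E1'" "(E0',E1') \<in> hat E2"
      have "Y E2 (kont (comp E0' (CAppR v Hole)) K t0) (kont (comp E1' (CAppR a1 Hole)) K1 t1)"
        using P h hat_comp[OF h(3) hat_appR[OF vt vv vv1]] vv vv1 by simp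
      then show "Y E2 (kont E0' (CAppR v K) t0) (kont E1' (CAppR a1 K1) t1)"
        by (simp add: kont_def)
    qed
  qed (use CAppR.prems in auto)
next
  case (CReset K) then show ?case by simp
qed

lemma env_no_step: "is_env E2 \<Longrightarrow> (u0,u1) \<in> E2 \<Longrightarrow> \<not> sstep u0 x"
  unfolding is_env_def normal_form_def stuck_def step_iff using value_no_sstep by blast

lemma tilde_step:
  assumes B: "Env E2 \<in> BB"
  shows "tilde_cl E2 u0 u1 \<Longrightarrow> closed u0 \<Longrightarrow> closed u1 \<Longrightarrow> sstep u0 u0' \<Longrightarrow>
    \<exists>u1'. steps u1 u1' \<and> Y E2 u0' u1'"
proof (induction arbitrary: u0' rule: tilde_cl.induct)
  case (base s t) then show ?case using env_no_step[OF BB_Env[OF B]] by blast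
next
  case (var n) then show ?case by (simp add: closed_def)
next
  case (lam s t) then show ?case using value_no_sstep by auto
next
  case (shift s t) then show ?case using stuck_no_sstep[of Hole s] by auto
next
  case (app s0 s1 w0 w1)
  have env: "is_env E2" using BB_Env[OF B] .
  have cl: "closed s0" "closed s1" "closed w0" "closed w1" using app.prems by (auto simp: closed_def)
  from app.prems(3) show ?case
  proof (cases rule: sstep.cases)
    case (sbeta b0)
    then have w0v: "is_value w0" and s0b: "s0 = Lam b0" and u0': "u0' = subst b0 0 w0" by auto
    have w1v: "is_value w1" using tilde_val[OF env app.hyps(2) w0v] .
    have wt: "(w0, w1) \<in> tilde E2" using app.hyps(2) cl unfolding tilde_def by auto
    from app.hyps(1)[unfolded s0b] show ?thesis
    proof (cases rule: tilde_cl.cases)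
      case base
      then have "is_value s1" using env unfolding is_env_def by auto
      then obtain b1 where s1b: "s1 = Lam b1" by (auto simp: is_value_Lam)
      have "Tri E2 (subst b0 0 w0) (subst b1 0 w1) \<in> BB"
        using BB_2a[OF B _ w0v w1v wt] base s0b s1b by simp
      moreover have "steps (App s1 w1) (subst b1 0 w1)"
        using s1b sstep.sbeta[OF w1v, of b1] sstep_step by auto
      ultimately show ?thesis using u0' Y_BB by blast
    next
      case (lam b1)
      have "tilde_cl E2 (subst b0 0 w0) (subst b1 0 w1)"
        using tilde_subst[OF _ app.hyps(2) is_env_closedR[OF env]] lam by simp
      moreover have "closed (subst b0 0 w0)" "closed (subst b1 0 w1)"
        using cl s0b lam by (auto simp: closed_def intro!: closed_subst)
      moreover have "steps (App s1 w1) (subst b1 0 w1)"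
        using lam sstep.sbeta[OF w1v, of b1] sstep_step by auto
      ultimately show ?thesis using u0' unfolding Y_def tilde_def by blast
    qed
  next
    case (sappL s0')
    then obtain s1' where "steps s1 s1'" "Y E2 s0' s1'" using app.IH(1) cl by blast
    moreover have "(CAppL Hole w0, CAppL Hole w1) \<in> hat E2"
      using hat_appL app.hyps(2) cl unfolding tilde_def by blast
    ultimately show ?thesis using sappL Y_wrap steps_ctx[of s1 s1' "CAppL Hole w1"] by fastforce
  next
    case (sappR w0')
    have s1v: "is_value s1" using tilde_val[OF env app.hyps(1)] sappR by blast
    obtain w1' where "steps w1 w1'" "Y E2 w0' w1'" using app.IH(2) cl sappR by blast
    moreover have "(CAppR s0 Hole, CAppR s1 Hole) \<in> hat E2"
      using hat_appR app.hyps(1) cl sappR s1v unfolding tilde_def by blast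
    ultimately show ?thesis using sappR s1v Y_wrap steps_ctx[of w1 w1' "CAppR s1 Hole"] by fastforce
  qed
next
  case (reset s0 s1)
  have env: "is_env E2" using BB_Env[OF B] .
  have cl: "closed s0" "closed s1" using reset.prems by (auto simp: closed_def)
  from reset.prems(3) show ?case
  proof (cases rule: sstep.cases)
    case (sshift K t)
    obtain K1 t1 where K1: "pure_ctx K1" "s1 = plug K1 (Shift t1)"
      and P: "\<And>E0' E1'. pure_ctx E0' \<Longrightarrow> pure_ctx E1' \<Longrightarrow> (E0',E1') \<in> hat E2 \<Longrightarrow>
         Y E2 (kont E0' K t) (kont E1' K1 t1)"
      using stuck_rel[OF B reset.hyps(1) cl, of K t] sshift by auto
    have "Y E2 (kont Hole K t) (kont Hole K1 t1)" using P by simp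
    moreover have "steps (Reset s1) (kont Hole K1 t1)"
      using K1 sstep.sshift[OF K1(1), of t1] sstep_step unfolding kont_def by auto
    ultimately show ?thesis using sshift unfolding kont_def by auto
  next
    case sreset
    have "is_value s1" using tilde_val[OF env reset.hyps(1)] sreset by blast
    then have "steps (Reset s1) s1" using sstep.sreset sstep_step by blast
    moreover have "Y E2 s0 s1" using reset.hyps cl unfolding Y_def tilde_def by auto
    ultimately show ?thesis using sreset by auto
  next
    case (sresetC s0')
    then obtain s1' where "steps s1 s1'" "Y E2 s0' s1'" using reset.IH cl by blast
    then show ?thesis using sresetC Y_wrap[OF _ hat_reset] steps_ctx[of s1 s1' "CReset Hole"] by fastforce
  qed
qed


inductive_set XS :: "elem set" where
  s2: "\<lbrakk>is_env E; E \<subseteq> tilde E2; Tri E2 s0 s1 \<in> BB; (F0,F1) \<in> hat E2\<rbrakk> \<Longrightarrow> Tri E (plug F0 s0) (plug F1 s1) \<in> XS"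
| s3: "\<lbrakk>is_env E; E \<subseteq> tilde E2; Env E2 \<in> BB; (u0,u1) \<in> tilde E2\<rbrakk> \<Longrightarrow> Tri E u0 u1 \<in> XS"
| se: "\<lbrakk>is_env E; E \<subseteq> tilde E2; Env E2 \<in> BB\<rbrakk> \<Longrightarrow> Env E \<in> XS"

lemma Y_XS: "Y E3 a b \<Longrightarrow> Env E3 \<in> BB \<Longrightarrow> is_env E \<Longrightarrow> E \<subseteq> tilde E3 \<Longrightarrow> Tri E a b \<in> XS"
  unfolding Y_def using XS.s2 XS.s3 by blast

lemma is_env_ins: "is_env E \<Longrightarrow> closed a \<Longrightarrow> closed b \<Longrightarrow> ((is_value a \<and> is_value b) \<or> (stuck a \<and> stuck b))
  \<Longrightarrow> is_env (E \<union> {(a,b)})"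
  unfolding is_env_def normal_form_def stuck_def by auto

lemma prog_cond_steps: "prog_cond X E a b' \<Longrightarrow> steps b b' \<Longrightarrow> prog_cond X E a b"
  unfolding prog_cond_def by (meson rtranclp_trans)

lemma s3_prog:
  assumes B: "Env E2 \<in> BB" and u: "(u0,u1) \<in> tilde E2" and env: "is_env E" and sub: "E \<subseteq> tilde E2"
  shows "prog_cond XS E u0 u1"
  unfolding prog_cond_def
proof (intro conjI allI impI)
  have env2: "is_env E2" using BB_Env[OF B] .
  have tc: "tilde_cl E2 u0 u1" "closed u0" "closed u1" using u unfolding tilde_def by auto
  {
    fix t0' assume "step u0 t0'"
    then obtain u1' where "steps u1 u1'" "Y E2 t0' u1'"
      using tilde_step[OF B tc] step_iff by blast
    then show "\<exists>t1'. steps u1 t1' \<and> Tri E t0' t1' \<in> XS" using Y_XS[OF _ B env sub] by blast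
  }
  {
    assume v: "is_value u0"
    then have v1: "is_value u1" using tilde_val[OF env2 tc(1)] by blast
    have "Env (E \<union> {(u0, u1)}) \<in> XS"
      using XS.se[OF is_env_ins[OF env tc(2,3)] _ B] v v1 sub u by blast
    then show "\<exists>v1. steps u1 v1 \<and> is_value v1 \<and> Env (E \<union> {(u0, v1)}) \<in> XS" using v1 by blast
  }
  {
    assume st: "stuck u0"
    then obtain K t where K: "pure_ctx K" "u0 = plug K (Shift t)" using stuck_iff tc(2) by blast
    then obtain K1 t1 where "pure_ctx K1" "u1 = plug K1 (Shift t1)"
      using stuck_rel[OF B tc, of K t] by blast
    then have st1: "stuck u1" using stuck_plug by blast
    have "Env (E \<union> {(u0, u1)}) \<in> XS"
      using XS.se[OF is_env_ins[OF env tc(2,3)] _ B] st st1 sub u by blast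
    then show "\<exists>t1'. steps u1 t1' \<and> stuck t1' \<and> Env (E \<union> {(u0, t1')}) \<in> XS" using st1 by blast
  }
qed

lemma s2_prog:
  assumes env: "is_env E" and sub: "E \<subseteq> tilde E2" and T: "Tri E2 s0 s1 \<in> BB" and F: "(F0,F1) \<in> hat E2"
  shows "prog_cond XS E (plug F0 s0) (plug F1 s1)"
proof (cases "normal_form s0")
  case True
  have P: "prog_cond BB E2 s0 s1" using BB_prog[OF T] .
  obtain r1 where r1: "steps s1 r1" "Env (E2 \<union> {(s0, r1)}) \<in> BB"
    using True P unfolding normal_form_def prog_cond_def by blast
  define E3 where "E3 = E2 \<union> {(s0, r1)}"
  have B3: "Env E3 \<in> BB" using r1 E3_def by simp
  have "(s0, r1) \<in> tilde E3" using is_env_sub_tilde[OF BB_Env[OF B3]] E3_def by auto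
  moreover have "(F0, F1) \<in> hat E3" using hat_mono[of E2 E3] F E3_def by auto
  ultimately have t3: "(plug F0 s0, plug F1 r1) \<in> tilde E3" using hat_plug by blast
  have sub3: "E \<subseteq> tilde E3" using sub tilde_mono[of E2 E3] E3_def by auto
  have "prog_cond XS E (plug F0 s0) (plug F1 r1)" using s3_prog[OF B3 t3 env sub3] .
  moreover have "steps (plug F1 s1) (plug F1 r1)"
    using steps_ctx[OF r1(1)] F unfolding hat_def by auto
  ultimately show ?thesis using prog_cond_steps by blast
next
  case False
  then obtain s0' where s0': "step s0 s0'" unfolding normal_form_def stuck_def by blast
  have ev: "eval_ctx F0" "eval_ctx F1" using F unfolding hat_def by auto
  have st: "sstep (plug F0 s0) (plug F0 s0')" using sstep_ctx[OF _ ev(1)] s0' step_iff by blast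
  show ?thesis
    unfolding prog_cond_def
  proof (intro conjI allI impI)
    fix u assume "step (plug F0 s0) u"
    then have u: "u = plug F0 s0'" using sstep_det st step_iff by blast
    obtain s1' where "steps s1 s1'" "Tri E2 s0' s1' \<in> BB"
      using BB_prog[OF T] s0' unfolding prog_cond_def by blast
    then show "\<exists>t1'. steps (plug F1 s1) t1' \<and> Tri E u t1' \<in> XS"
      using u XS.s2[OF env sub _ F] steps_ctx[OF _ ev(2)] by blast
  next
    assume "is_value (plug F0 s0)" then show "\<exists>v1. steps (plug F1 s1) v1 \<and> is_value v1 \<and> Env (E \<union> {(plug F0 s0, v1)}) \<in> XS"
      using value_no_sstep st by blast
  next
    assume "stuck (plug F0 s0)" then show "\<exists>t1'. steps (plug F1 s1) t1' \<and> stuck t1' \<and> Env (E \<union> {(plug F0 s0, t1')}) \<in> XS"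
      using st step_iff unfolding stuck_def by blast
  qed
qed

lemma XS_prog: "Tri E a b \<in> XS \<Longrightarrow> prog_cond XS E a b"
  by (erule XS.cases) (auto intro: s2_prog s3_prog)

lemma XS_rel: "env_relation XS"
  unfolding env_relation_def
proof (rule conjI; intro allI impI)
  fix E assume "Env E \<in> XS" then show "is_env E" by (cases rule: XS.cases) auto
next
  fix E t0 t1 assume "Tri E t0 t1 \<in> XS"
  then show "is_env E \<and> closed t0 \<and> closed t1"
  proof (cases rule: XS.cases)
    case (s2 E2 s0 s1 F0 F1)
    then have "closed s0 \<and> closed s1" using BB_Tri by blast
    then show ?thesis using s2 closed_plug unfolding hat_def by auto
  next
    case (s3 E2)
    then show ?thesis unfolding tilde_def by auto
  qed
qed

lemma sub_conv: "E \<subseteq> tilde E2 \<Longrightarrow> E\<inverse> \<subseteq> tilde (E2\<inverse>)"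
  by (auto simp: tilde_conv)

lemma BB_Tri_flip: "Tri E a b \<in> BB \<Longrightarrow> Tri (E\<inverse>) b a \<in> BB"
  using BB_flip[of "Tri E a b"] by simp
lemma BB_Env_flip: "Env E \<in> BB \<Longrightarrow> Env (E\<inverse>) \<in> BB"
  using BB_flip[of "Env E"] by simp

lemma XS_flip: "e \<in> XS \<Longrightarrow> flipel e \<in> XS"
proof (induction rule: XS.induct)
  case (s2 E E2 s0 s1 F0 F1)
  then show ?case using XS.s2[of "E\<inverse>" "E2\<inverse>" s1 s0 F1 F0]
    by (simp add: is_env_conv sub_conv BB_Tri_flip mem_conv_hat)
next
  case (s3 E E2 u0 u1)
  then show ?case using XS.s3[of "E\<inverse>" "E2\<inverse>" u1 u0]
    by (simp add: is_env_conv sub_conv BB_Env_flip mem_conv_tilde)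
next
  case (se E E2)
  then show ?case using XS.se[of "E\<inverse>" "E2\<inverse>"]
    by (simp add: is_env_conv sub_conv BB_Env_flip)
qed

lemma XS_2a:
  assumes "Env E \<in> XS" "(Lam t0, Lam t1) \<in> E" "is_value v0" "is_value v1" "(v0, v1) \<in> tilde E"
  shows "Tri E (subst t0 0 v0) (subst t1 0 v1) \<in> XS"
  using assms(1)
proof (cases rule: XS.cases)
  case (se E2)
  have env2: "is_env E2" using BB_Env[OF se(3)] .
  have vt: "(v0, v1) \<in> tilde E2" using assms(5) tilde_sub[OF se(2)] by blast
  have lt: "tilde_cl E2 (Lam t0) (Lam t1)" "closed (Lam t0)" "closed (Lam t1)"
    using assms(2) se(2) unfolding tilde_def by auto
  from lt(1) show ?thesis
  proof (cases rule: tilde_cl.cases)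
    case base
    then have "Tri E2 (subst t0 0 v0) (subst t1 0 v1) \<in> BB" using BB_2a[OF se(3) _ assms(3,4) vt] by simp
    then show ?thesis using Y_XS[OF Y_BB se(3) se(1) se(2)] by blast
  next
    case lam
    have "tilde_cl E2 (subst t0 0 v0) (subst t1 0 v1)"
      using tilde_subst[OF _ _ is_env_closedR[OF env2]] lam vt unfolding tilde_def by auto
    moreover have "closed (subst t0 0 v0)" "closed (subst t1 0 v1)"
      using lt vt unfolding tilde_def by (auto simp: closed_def intro!: closed_subst)
    ultimately have "(subst t0 0 v0, subst t1 0 v1) \<in> tilde E2" unfolding tilde_def by auto
    then show ?thesis using XS.s3[OF se(1,2,3)] by blast
  qed
qed

lemma XS_2b:
  assumes "Env E \<in> XS" "pure_ctx E0" "pure_ctx E1" "(plug E0 (Shift t0), plug E1 (Shift t1)) \<in> E"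
    "pure_ctx E0'" "pure_ctx E1'" "(E0', E1') \<in> hat E"
  shows "Tri E (kont E0' E0 t0) (kont E1' E1 t1) \<in> XS"
  using assms(1)
proof (cases rule: XS.cases)
  case (se E2)
  have pt: "tilde_cl E2 (plug E0 (Shift t0)) (plug E1 (Shift t1))"
    "closed (plug E0 (Shift t0))" "closed (plug E1 (Shift t1))"
    using assms(4) se(2) unfolding tilde_def by auto
  obtain K1 t1' where K1: "pure_ctx K1" "plug E1 (Shift t1) = plug K1 (Shift t1')"
    and P: "\<And>E0' E1'. pure_ctx E0' \<Longrightarrow> pure_ctx E1' \<Longrightarrow> (E0',E1') \<in> hat E2 \<Longrightarrow>
         Y E2 (kont E0' E0 t0) (kont E1' K1 t1')"
    using stuck_rel[OF se(3) pt assms(2)] by blast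
  have "E1 = K1" "t1 = t1'" using unique_decomp[OF assms(3) K1(1) K1(2)] by auto
  moreover have "(E0', E1') \<in> hat E2" using hat_sub[OF se(2)] assms(7) by blast
  ultimately have "Y E2 (kont E0' E0 t0) (kont E1' E1 t1)" using P assms(5,6) by blast
  then show ?thesis using Y_XS[OF _ se(3) se(1) se(2)] by blast
qed

lemma env_bisim_XS: "env_bisim XS"
proof (rule half_bisim[OF XS_rel XS_flip XS_prog])
  fix E assume "Env E \<in> XS"
  then show "(\<forall>t0 t1 v0 v1. (Lam t0, Lam t1) \<in> E \<longrightarrow> is_value v0 \<longrightarrow> is_value v1 \<longrightarrow>
            (v0, v1) \<in> tilde E \<longrightarrow> Tri E (subst t0 0 v0) (subst t1 0 v1) \<in> XS) \<and>
        (\<forall>E0 E1 t0 t1 E0' E1'. pure_ctx E0 \<longrightarrow> pure_ctx E1 \<longrightarrow>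
            (plug E0 (Shift t0), plug E1 (Shift t1)) \<in> E \<longrightarrow>
            pure_ctx E0' \<longrightarrow> pure_ctx E1' \<longrightarrow> (E0', E1') \<in> hat E \<longrightarrow>
            Tri E
              (Reset (subst t0 0 (Lam (Reset (plug (lift_ctx 0 E0') (plug (lift_ctx 0 E0) (Var 0)))))))
              (Reset (subst t1 0 (Lam (Reset (plug (lift_ctx 0 E1') (plug (lift_ctx 0 E1) (Var 0)))))))
            \<in> XS)"
    using XS_2a XS_2b unfolding kont_def by blast
qed

theorem lemma8:
  assumes "is_env \<E>"
    and "closed t0" and "closed t1"
    and "approx_in \<E> t0 t1"
    and "eval_ctx F" and "closed_ctx F"
  shows "approx_in \<E> (plug F t0) (plug F t1)"
proof -
  have T: "Tri \<E> t0 t1 \<in> BB" using assms(4) unfolding approx_in_def .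
  have "(F, F) \<in> hat \<E>" using hat_refl assms(5,6) by blast
  then have "Tri \<E> (plug F t0) (plug F t1) \<in> XS"
    using XS.s2[OF assms(1) is_env_sub_tilde[OF assms(1)] T] by blast
  then show ?thesis using BB_sub[OF env_bisim_XS] unfolding approx_in_def by blast
qed

end
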